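(* Consider the problem $\min_{x\in X}f_0(x)$ s.t. $f_i(x)\le0$, $i\in[M]$, with $X\subseteq\mathbb{R}^n$ compact convex and $f_0,\dots,f_M$ convex real-valued on $X$; let $\mathbf f=(f_1,\dots,f_M)^\top$ and $d(z)=\min_{x\in X}\{f_0(x)+z^\top\mathbf f(x)\}$ for $z\ge0$. Let $\bar x\in X$ and $\bar z\ge0$ be random vectors, and suppose there are constants $\epsilon_1,\epsilon_0$ such that for every (possibly random, possibly depending on $(\bar x,\bar z)$) $x\in X$ and $z\ge0$, $$\mathbb{E}\big[f_0(\bar x)-f_0(x)-\langle\bar z,\mathbf f(x)\rangle+\langle z,\mathbf f(\bar x)\rangle\big]\le\epsilon_1+\epsilon_0\mathbb{E}[\|z\|^2].$$ Then for any $(x^*,z^* )$ satisfying the KKT conditions (i.e. $x^*\in X$, $0\in\partial f_0(x^* )+\mathcal N_X(x^* )+\sum_iz_i^*\partial f_i(x^* )$, $f_i(x^* )\le0$, $z_i^*\ge0$, $z_i^*f_i(x^* )=0$), $$\mathbb{E}\big[|f_0(\bar x)-f_0(x^* )|\big]\le2\epsilon_1+9\epsilon_0\|z^*\|^2,$$ $$\mathbb{E}\Big[\sum_{i=1}^M[f_i(\bar x)]_+\Big]\le\epsilon_1+\epsilon_0\|\mathbf 1+z^*\|^2,$$ $$\mathbb{E}\big[d(z^* )-d(\bar z)\big]\le\frac32\big(\epsilon_1+3\epsilon_0\|z^*\|^2\big).$$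
   Context: $[a]_+=\max\{a,0\}$; $\mathbf 1$ is the all-ones vector; $\mathcal N_X$ is the normal cone of $X$. *)

theory Defs
  imports "HOL-Probability.Probability"
begin

text \<open>Constraint functions are indexed by nat: f 0 is the objective, f 1, ..., f M the
  constraints. Dual vectors z in R^M are functions nat => real, only components 1..M matter.\<close>

definition subdiff :: "('a::euclidean_space \<Rightarrow> real) \<Rightarrow> 'a set \<Rightarrow> 'a \<Rightarrow> 'a set" where
  "subdiff g X x = {s. \<forall>y\<in>X. g y \<ge> g x + s \<bullet> (y - x)}"

definition normal_cone :: "'a::euclidean_space set \<Rightarrow> 'a \<Rightarrow> 'a set" where
  "normal_cone X x = {v. \<forall>y\<in>X. v \<bullet> (y - x) \<le> 0}"

definition lagr :: "(nat \<Rightarrow> 'a \<Rightarrow> real) \<Rightarrow> nat \<Rightarrow> (nat \<Rightarrow> real) \<Rightarrow> 'a \<Rightarrow> real" where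
  "lagr f M z x = f 0 x + (\<Sum>i=1..M. z i * f i x)"

definition dualfun :: "'a set \<Rightarrow> (nat \<Rightarrow> 'a \<Rightarrow> real) \<Rightarrow> nat \<Rightarrow> (nat \<Rightarrow> real) \<Rightarrow> real" where
  "dualfun X f M z = (INF x\<in>X. lagr f M z x)"

definition sqnorm :: "nat \<Rightarrow> (nat \<Rightarrow> real) \<Rightarrow> real" where
  "sqnorm M z = (\<Sum>i=1..M. (z i)\<^sup>2)"

definition KKT :: "'a::euclidean_space set \<Rightarrow> (nat \<Rightarrow> 'a \<Rightarrow> real) \<Rightarrow> nat \<Rightarrow> 'a \<Rightarrow> (nat \<Rightarrow> real) \<Rightarrow> bool" where
  "KKT X f M xs zs \<longleftrightarrow> xs \<in> X \<and>
     (\<exists>g0 v g. g0 \<in> subdiff (f 0) X xs \<and> v \<in> normal_cone X xs \<and>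
        (\<forall>i\<in>{1..M}. g i \<in> subdiff (f i) X xs) \<and>
        g0 + v + (\<Sum>i=1..M. zs i *\<^sub>R g i) = 0) \<and>
     (\<forall>i\<in>{1..M}. f i xs \<le> 0 \<and> zs i \<ge> 0 \<and> zs i * f i xs = 0)"

definition gap_integrand ::
  "(nat \<Rightarrow> 'a \<Rightarrow> real) \<Rightarrow> nat \<Rightarrow> ('w \<Rightarrow> 'a) \<Rightarrow> ('w \<Rightarrow> nat \<Rightarrow> real) \<Rightarrow> ('w \<Rightarrow> 'a) \<Rightarrow> ('w \<Rightarrow> nat \<Rightarrow> real) \<Rightarrow> 'w \<Rightarrow> real" where
  "gap_integrand f M xb zb x z \<omega> =
     f 0 (xb \<omega>) - f 0 (x \<omega>) - (\<Sum>i=1..M. zb \<omega> i * f i (x \<omega>)) + (\<Sum>i=1..M. z \<omega> i * f i (xb \<omega>))"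

definition admissible ::
  "'w measure \<Rightarrow> 'a::euclidean_space set \<Rightarrow> (nat \<Rightarrow> 'a \<Rightarrow> real) \<Rightarrow> nat \<Rightarrow> ('w \<Rightarrow> 'a) \<Rightarrow> ('w \<Rightarrow> nat \<Rightarrow> real) \<Rightarrow> ('w \<Rightarrow> 'a) \<Rightarrow> ('w \<Rightarrow> nat \<Rightarrow> real) \<Rightarrow> bool" where
  "admissible P X f M xb zb x z \<longleftrightarrow>
     x \<in> borel_measurable P \<and> (\<forall>\<omega>\<in>space P. x \<omega> \<in> X) \<and>
     (\<forall>i\<in>{1..M}. (\<lambda>\<omega>. z \<omega> i) \<in> borel_measurable P \<and> (\<forall>\<omega>\<in>space P. z \<omega> i \<ge> 0)) \<and>
     integrable P (gap_integrand f M xb zb x z) \<and>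
     integrable P (\<lambda>\<omega>. sqnorm M (z \<omega>))"

end

theory Submission
  imports Defs
begin

lemma quad_contra:
  fixes A B e :: real
  assumes "e > 0" "\<forall>t\<ge>0. A + t*B \<le> - e * t^2"
  shows False
proof -
  define t where "t = max 1 ((\<bar>A\<bar>+\<bar>B\<bar>+1)/e)"
  have t1: "t \<ge> 1" unfolding t_def by simp
  have "(\<bar>A\<bar>+\<bar>B\<bar>+1)/e \<le> t" unfolding t_def by simp
  hence et: "e*t \<ge> \<bar>A\<bar>+\<bar>B\<bar>+1" using assms(1) by (simp add: field_simps)
  have "e*t^2 = t*(e*t)" by (simp add: power2_eq_square)
  also have "\<dots> \<ge> t*(\<bar>A\<bar>+\<bar>B\<bar>+1)" using et t1 by (intro mult_left_mono) auto
  finally have h1: "e*t^2 \<ge> t*\<bar>B\<bar> + t*(\<bar>A\<bar>+1)" by (simp add: algebra_simps)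
  have h2': "t*(\<bar>A\<bar>+1) \<ge> 1*(\<bar>A\<bar>+1)" using t1 by (intro mult_right_mono) auto
  hence h2: "t*(\<bar>A\<bar>+1) \<ge> \<bar>A\<bar>+1" by simp
  have h3: "t*B \<ge> - (t*\<bar>B\<bar>)" using abs_ge_minus_self[of "t*B"] t1 by (simp add: abs_mult)
  have h4: "A + t*B \<le> - e * t^2" using assms(2) t1 by auto
  have h5: "-\<bar>A\<bar> \<le> A" by simp
  have "A + t*B + e*t^2 \<ge> 1" using h1 h2 h3 h5 by linarith
  with h4 show False by linarith
qed
lemma density:
  fixes f :: "nat \<Rightarrow> 'a \<Rightarrow> real"
  assumes "xs \<in> X"
  shows "\<exists>C. countable C \<and> C \<subseteq> X \<and> xs \<in> C \<and>
     (\<forall>x\<in>X. \<forall>e>0. \<exists>c\<in>C. \<forall>i\<le>M. \<bar>f i c - f i x\<bar> < e)"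
proof -
  define Q where "Q = (\<lambda>(q::rat list, r::rat). {x\<in>X. \<forall>i\<le>M. \<bar>f i x - real_of_rat (q!i)\<bar> < real_of_rat r})"
  define C where "C = insert xs ((\<lambda>p. SOME x. x \<in> Q p) ` {p. Q p \<noteq> {}})"
  have QX: "Q p \<subseteq> X" for p by (auto simp: Q_def split: prod.splits)
  have "countable C" unfolding C_def
    by (intro countable_insert countable_image, rule countable_subset[OF subset_UNIV], rule countableI_type)
  moreover have "C \<subseteq> X"
  proof
    fix y assume "y \<in> C"
    then consider "y = xs" | p where "Q p \<noteq> {}" "y = (SOME x. x \<in> Q p)" unfolding C_def by blast
    then show "y \<in> X"
    proof cases
      case 1 then show ?thesis using assms by simp
    next
      case 2 then have "y \<in> Q p" using some_in_eq by metis
      then show ?thesis using QX by blast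
    qed
  qed
  moreover have "\<forall>x\<in>X. \<forall>e>0. \<exists>c\<in>C. \<forall>i\<le>M. \<bar>f i c - f i x\<bar> < e"
  proof (intro ballI allI impI)
    fix x e assume x: "x \<in> X" and e: "(e::real) > 0"
    obtain r where r: "0 < real_of_rat r" "real_of_rat r < e/2" using of_rat_dense[of 0 "e/2"] e by auto
    have "\<forall>i. \<exists>q. f i x - real_of_rat r < real_of_rat q \<and> real_of_rat q < f i x + real_of_rat r"
    proof
      fix i
      have "f i x - real_of_rat r < f i x + real_of_rat r" using r(1) by simp
      then show "\<exists>q. f i x - real_of_rat r < real_of_rat q \<and> real_of_rat q < f i x + real_of_rat r"
        by (rule of_rat_dense)
    qed
    then have "\<exists>qf. \<forall>i. f i x - real_of_rat r < real_of_rat (qf i) \<and> real_of_rat (qf i) < f i x + real_of_rat r"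
      by (rule choice)
    then obtain qf where qf: "\<And>i. f i x - real_of_rat r < real_of_rat (qf i) \<and> real_of_rat (qf i) < f i x + real_of_rat r"
      by blast
    define qs where "qs = map qf [0..<Suc M]"
    have qsi: "qs ! i = qf i" if "i \<le> M" for i
      unfolding qs_def using that by (simp del: upt_Suc add: nth_map)
    have "\<forall>i\<le>M. \<bar>f i x - real_of_rat (qs!i)\<bar> < real_of_rat r"
    proof (intro allI impI)
      fix i assume "i \<le> M"
      then have "qs ! i = qf i" by (rule qsi)
      then show "\<bar>f i x - real_of_rat (qs!i)\<bar> < real_of_rat r" using qf[of i] by (simp add: abs_less_iff)
    qed
    then have xQ: "x \<in> Q (qs, r)" unfolding Q_def using x by simp
    define c where "c = (SOME y. y \<in> Q (qs, r))"
    have cQ: "c \<in> Q (qs, r)" unfolding c_def using xQ by (rule someI)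
    have "Q (qs, r) \<noteq> {}" using xQ by blast
    then have "c \<in> C" unfolding C_def c_def by blast
    moreover have "\<forall>i\<le>M. \<bar>f i c - f i x\<bar> < e"
    proof (intro allI impI)
      fix i assume "i \<le> M"
      then have "\<bar>f i c - real_of_rat (qs!i)\<bar> < real_of_rat r" "\<bar>f i x - real_of_rat (qs!i)\<bar> < real_of_rat r"
        using cQ xQ unfolding Q_def by auto
      then show "\<bar>f i c - f i x\<bar> < e" using r by linarith
    qed
    ultimately show "\<exists>c\<in>C. \<forall>i\<le>M. \<bar>f i c - f i x\<bar> < e" by blast
  qed
  moreover have "xs \<in> C" unfolding C_def by simp
  ultimately show ?thesis by blast
qed
lemma lagr_close:
  assumes "\<forall>i\<le>M. \<bar>f i c - f i x\<bar> < e"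
  shows "\<bar>lagr f M z c - lagr f M z x\<bar> \<le> e * (1 + (\<Sum>i=1..M. \<bar>z i\<bar>))"
proof -
  have "lagr f M z c - lagr f M z x = (f 0 c - f 0 x) + (\<Sum>i=1..M. z i * (f i c - f i x))"
    unfolding lagr_def by (simp add: sum_subtractf[symmetric] algebra_simps)
  also have "\<bar>\<dots>\<bar> \<le> \<bar>f 0 c - f 0 x\<bar> + (\<Sum>i=1..M. \<bar>z i\<bar> * \<bar>f i c - f i x\<bar>)"
    by (rule order_trans[OF abs_triangle_ineq]) (auto intro!: order_trans[OF sum_abs] simp: abs_mult)
  also have "\<dots> \<le> e + (\<Sum>i=1..M. \<bar>z i\<bar> * e)"
    using assms by (intro add_mono sum_mono mult_left_mono) (auto simp: less_imp_le)
  also have "\<dots> = e * (1 + (\<Sum>i=1..M. \<bar>z i\<bar>))" by (simp add: distrib_left sum_distrib_left mult.commute)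
  finally show ?thesis .
qed

theorem lemma9:
  fixes P :: "'w measure" and X :: "'a::euclidean_space set"
    and f :: "nat \<Rightarrow> 'a \<Rightarrow> real" and M :: nat
    and xb :: "'w \<Rightarrow> 'a" and zb :: "'w \<Rightarrow> nat \<Rightarrow> real"
    and eps1 eps0 :: real and xs :: 'a and zs :: "nat \<Rightarrow> real"
  assumes "prob_space P"
    and "compact X" and "convex X"
    and "\<forall>i\<in>{0..M}. convex_on X (f i)"
    and "xb \<in> borel_measurable P" and "\<forall>\<omega>\<in>space P. xb \<omega> \<in> X"
    and "\<forall>i\<in>{1..M}. (\<lambda>\<omega>. zb \<omega> i) \<in> borel_measurable P \<and> (\<forall>\<omega>\<in>space P. zb \<omega> i \<ge> 0)"
    and "\<forall>i\<in>{0..M}. integrable P (\<lambda>\<omega>. f i (xb \<omega>))"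
    and "\<forall>i\<in>{1..M}. integrable P (\<lambda>\<omega>. zb \<omega> i)"
    and "integrable P (\<lambda>\<omega>. dualfun X f M (zb \<omega>))"
    and "\<forall>(x :: 'w \<Rightarrow> 'a) (z :: 'w \<Rightarrow> nat \<Rightarrow> real). admissible P X f M xb zb x z \<longrightarrow>
           integral\<^sup>L P (gap_integrand f M xb zb x z) \<le> eps1 + eps0 * integral\<^sup>L P (\<lambda>\<omega>. sqnorm M (z \<omega>))"
    and "KKT X f M xs zs"
  shows "integral\<^sup>L P (\<lambda>\<omega>. \<bar>f 0 (xb \<omega>) - f 0 xs\<bar>) \<le> 2 * eps1 + 9 * eps0 * sqnorm M zs \<and>
         integral\<^sup>L P (\<lambda>\<omega>. \<Sum>i=1..M. max (f i (xb \<omega>)) 0) \<le> eps1 + eps0 * sqnorm M (\<lambda>i. 1 + zs i) \<and>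
         integral\<^sup>L P (\<lambda>\<omega>. dualfun X f M zs - dualfun X f M (zb \<omega>)) \<le> 3/2 * (eps1 + 3 * eps0 * sqnorm M zs)"
proof -
  interpret prob_space P by (rule assms(1))
  note H = assms(11)
  from assms(12) obtain g0 v g where xsX: "xs \<in> X" and g0: "g0 \<in> subdiff (f 0) X xs"
    and v: "v \<in> normal_cone X xs" and g: "\<forall>i\<in>{1..M}. g i \<in> subdiff (f i) X xs"
    and sumg: "g0 + v + (\<Sum>i=1..M. zs i *\<^sub>R g i) = 0"
    and comp: "\<forall>i\<in>{1..M}. f i xs \<le> 0 \<and> zs i \<ge> 0 \<and> zs i * f i xs = 0"
    unfolding KKT_def by blast
  have zs0: "zs i \<ge> 0" if "i \<in> {1..M}" for i using comp that by blast
  define s where "s = sqnorm M zs"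
  have s0: "s \<ge> 0" unfolding s_def sqnorm_def by (simp add: sum_nonneg)
  have fm: "(\<lambda>\<omega>. f i (xb \<omega>)) \<in> borel_measurable P" if "i \<in> {0..M}" for i
    using assms(8) that by blast
  have fint: "integrable P (\<lambda>\<omega>. f i (xb \<omega>))" if "i \<in> {0..M}" for i
    using assms(8) that by blast
  have zbm: "(\<lambda>\<omega>. zb \<omega> i) \<in> borel_measurable P" if "i \<in> {1..M}" for i
    using assms(7) that by blast
  have zb0: "zb \<omega> i \<ge> 0" if "i \<in> {1..M}" "\<omega> \<in> space P" for i \<omega>
    using assms(7) that by blast
  have zbint: "integrable P (\<lambda>\<omega>. zb \<omega> i)" if "i \<in> {1..M}" for i
    using assms(9) that by blast
  have dm: "(\<lambda>\<omega>. dualfun X f M (zb \<omega>)) \<in> borel_measurable P"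
    using assms(10) by blast

  have sad: "f 0 xs \<le> f 0 y + (\<Sum>i=1..M. zs i * f i y)" if y: "y \<in> X" for y
  proof -
    have h0: "f 0 y \<ge> f 0 xs + g0 \<bullet> (y - xs)" using g0 y unfolding subdiff_def by blast
    have hv: "v \<bullet> (y - xs) \<le> 0" using v y unfolding normal_cone_def by blast
    have hi: "(zs i *\<^sub>R g i) \<bullet> (y - xs) \<le> zs i * f i y" if i: "i \<in> {1..M}" for i
    proof -
      have "f i y \<ge> f i xs + g i \<bullet> (y - xs)" using g i y unfolding subdiff_def by blast
      hence "zs i * f i y \<ge> zs i * (f i xs + g i \<bullet> (y - xs))" using zs0[OF i] by (intro mult_left_mono) auto
      moreover have "zs i * f i xs = 0" using comp i by blast
      hence "(zs i *\<^sub>R g i) \<bullet> (y - xs) = zs i * (f i xs + g i \<bullet> (y - xs))" by (simp add: distrib_left)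
      ultimately show ?thesis by linarith
    qed
    have "(\<Sum>i=1..M. (zs i *\<^sub>R g i) \<bullet> (y - xs)) \<le> (\<Sum>i=1..M. zs i * f i y)"
      by (rule sum_mono) (rule hi)
    moreover have "(\<Sum>i=1..M. (zs i *\<^sub>R g i) \<bullet> (y - xs)) = (\<Sum>i=1..M. zs i *\<^sub>R g i) \<bullet> (y - xs)"
      by (simp add: inner_sum_left)
    moreover have "(\<Sum>i=1..M. zs i *\<^sub>R g i) = - (g0 + v)"
      using sumg by (metis add.commute eq_neg_iff_add_eq_0)
    ultimately have "- (g0 + v) \<bullet> (y - xs) \<le> (\<Sum>i=1..M. zs i * f i y)" by simp
    hence "- (g0 \<bullet> (y - xs)) - v \<bullet> (y - xs) \<le> (\<Sum>i=1..M. zs i * f i y)"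
      by (simp add: inner_diff_left)
    with h0 hv show ?thesis by linarith
  qed

  have "bounded X" using assms(2) compact_imp_bounded by blast
  then obtain R where R: "\<forall>y\<in>X. norm y \<le> R" unfolding bounded_iff by blast
  have "\<exists>B. \<forall>y\<in>X. B \<le> f i y" if i: "i \<in> {0..M}" for i
  proof -
    have "\<exists>gi. gi \<in> subdiff (f i) X xs"
    proof (cases "i = 0")
      case True then show ?thesis using g0 by blast
    next
      case False then have "i \<in> {1..M}" using i by auto
      then show ?thesis using g by blast
    qed
    then obtain gi where gi: "gi \<in> subdiff (f i) X xs" by blast
    have "f i xs - norm gi * (R + norm xs) \<le> f i y" if y: "y \<in> X" for y
    proof -
      have a: "f i y \<ge> f i xs + gi \<bullet> (y - xs)" using gi y unfolding subdiff_def by blast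
      have b: "(- gi) \<bullet> (y - xs) \<le> norm (- gi) * norm (y - xs)" by (rule norm_cauchy_schwarz)
      have c: "norm (y - xs) \<le> R + norm xs" using R y norm_triangle_ineq4[of y xs] by fastforce
      have d: "norm gi * norm (y - xs) \<le> norm gi * (R + norm xs)" using c by (intro mult_left_mono) auto
      from a b d show ?thesis by simp
    qed
    then show ?thesis by blast
  qed
  then obtain Bf where Bf: "\<forall>i\<in>{0..M}. \<forall>y\<in>X. Bf i \<le> f i y" by metis
  have bdd: "bdd_below ((\<lambda>y. lagr f M z y) ` X)" if z: "\<forall>i\<in>{1..M}. z i \<ge> 0" for z
  proof (rule bdd_belowI2)
    fix y assume y: "y \<in> X"
    have "(\<Sum>i=1..M. z i * Bf i) \<le> (\<Sum>i=1..M. z i * f i y)"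
      using z Bf y by (intro sum_mono mult_left_mono) auto
    moreover have "Bf 0 \<le> f 0 y" using Bf y by auto
    ultimately show "Bf 0 + (\<Sum>i=1..M. z i * Bf i) \<le> lagr f M z y" unfolding lagr_def by linarith
  qed
  have "(\<Sum>i=1..M. zs i * f i xs) = 0" using comp by (intro sum.neutral) blast
  then have Lxs: "lagr f M zs xs = f 0 xs" unfolding lagr_def by simp
  have dzs: "dualfun X f M zs = f 0 xs"
    unfolding dualfun_def
  proof (rule antisym)
    show "(INF y\<in>X. lagr f M zs y) \<le> f 0 xs" using cINF_lower[OF bdd xsX, of zs] Lxs zs0 by simp
    show "f 0 xs \<le> (INF y\<in>X. lagr f M zs y)" using xsX sad
      by (intro cINF_greatest) (auto simp: lagr_def)
  qed
  have test: "integral\<^sup>L P lb \<le> eps1 + eps0 * integral\<^sup>L P (\<lambda>\<omega>. sqnorm M (z \<omega>))"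
    if zm: "\<forall>i\<in>{1..M}. (\<lambda>\<omega>. z \<omega> i) \<in> borel_measurable P \<and> (\<forall>\<omega>\<in>space P. z \<omega> i \<ge> 0)"
    and zi: "\<And>i. i\<in>{1..M} \<Longrightarrow> integrable P (\<lambda>\<omega>. z \<omega> i * f i (xb \<omega>))"
    and sqi: "integrable P (\<lambda>\<omega>. sqnorm M (z \<omega>))"
    and lbi: "integrable P lb"
    and lbl: "\<And>\<omega>. \<omega>\<in>space P \<Longrightarrow> lb \<omega> \<le> f 0 (xb \<omega>) - f 0 xs + (\<Sum>i=1..M. z \<omega> i * f i (xb \<omega>))"
    for z :: "'w \<Rightarrow> nat \<Rightarrow> real" and lb
  proof -
    have gi: "integrable P (gap_integrand f M xb zb (\<lambda>_. xs) z)"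
      unfolding gap_integrand_def
      by (intro Bochner_Integration.integrable_add Bochner_Integration.integrable_diff
          integrable_const Bochner_Integration.integrable_sum integrable_mult_left fint zbint zi) auto
    have "admissible P X f M xb zb (\<lambda>_. xs) z"
      unfolding admissible_def using zm sqi xsX gi by auto
    then have "integral\<^sup>L P (gap_integrand f M xb zb (\<lambda>_. xs) z) \<le> eps1 + eps0 * integral\<^sup>L P (\<lambda>\<omega>. sqnorm M (z \<omega>))"
      using H by blast
    moreover have "integral\<^sup>L P lb \<le> integral\<^sup>L P (gap_integrand f M xb zb (\<lambda>_. xs) z)"
    proof (rule integral_mono[OF lbi gi])
      fix \<omega> assume w: "\<omega> \<in> space P"
      have "(\<Sum>i=1..M. zb \<omega> i * f i xs) \<le> 0"
        using zb0[OF _ w] comp by (intro sum_nonpos mult_nonneg_nonpos) auto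
      then show "lb \<omega> \<le> gap_integrand f M xb zb (\<lambda>_. xs) z \<omega>"
        using lbl[OF w] unfolding gap_integrand_def by linarith
    qed
    ultimately show ?thesis by linarith
  qed

  have e0: "0 \<le> eps0 \<or> M = 0"
  proof (rule ccontr)
    assume "\<not> (0 \<le> eps0 \<or> M = 0)"
    hence neg: "eps0 < 0" "M > 0" by auto
    define G where "G = (\<lambda>\<omega>. f 0 (xb \<omega>) - f 0 xs - (\<Sum>i=1..M. zb \<omega> i * f i xs))"
    define h where "h = (\<lambda>\<omega>. \<Sum>i=1..M. f i (xb \<omega>))"
    have Gi: "integrable P G" unfolding G_def
      by (intro Bochner_Integration.integrable_diff
          integrable_const Bochner_Integration.integrable_sum integrable_mult_left fint zbint) auto
    have hi: "integrable P h" unfolding h_def by (intro Bochner_Integration.integrable_sum fint) auto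
    define A where "A = integral\<^sup>L P G - eps1"
    define B where "B = integral\<^sup>L P h"
    have "\<forall>t\<ge>0. A + t*B \<le> - (- eps0 * real M) * t^2"
    proof (intro allI impI)
      fix t :: real assume t: "t \<ge> 0"
      define z where "z = (\<lambda>(\<omega>::'w) (i::nat). t)"
      have gapeq: "gap_integrand f M xb zb (\<lambda>_. xs) z = (\<lambda>\<omega>. G \<omega> + t * h \<omega>)"
        unfolding gap_integrand_def G_def h_def z_def by (simp add: sum_distrib_left)
      have sqeq: "(\<lambda>\<omega>. sqnorm M (z \<omega>)) = (\<lambda>\<omega>. real M * t^2)"
        unfolding sqnorm_def z_def by simp
      have gi: "integrable P (gap_integrand f M xb zb (\<lambda>_. xs) z)"
        unfolding gapeq by (intro Bochner_Integration.integrable_add Gi integrable_mult_right hi)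
      have "admissible P X f M xb zb (\<lambda>_. xs) z"
        unfolding admissible_def using xsX gi t unfolding sqeq by (auto simp: z_def)
      then have "integral\<^sup>L P (gap_integrand f M xb zb (\<lambda>_. xs) z) \<le> eps1 + eps0 * integral\<^sup>L P (\<lambda>\<omega>. sqnorm M (z \<omega>))"
        using H by blast
      also have "integral\<^sup>L P (\<lambda>\<omega>. sqnorm M (z \<omega>)) = real M * t^2"
        unfolding sqeq by (simp add: prob_space)
      also have "integral\<^sup>L P (gap_integrand f M xb zb (\<lambda>_. xs) z) = integral\<^sup>L P G + t * B"
        unfolding gapeq B_def using Gi hi by simp
      finally show "A + t*B \<le> - (- eps0 * real M) * t^2" unfolding A_def by simp
    qed
    moreover have "- eps0 * real M > 0" using neg by (simp add: mult_neg_pos)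
    ultimately show False using quad_contra by blast
  qed
  have e0s: "eps0 * sqnorm M w \<le> eps0 * K" if "sqnorm M w \<le> K" "0 \<le> K" "M = 0 \<Longrightarrow> K = 0" for w K
  proof (cases "M = 0")
    case True then show ?thesis using that by (simp add: sqnorm_def)
  next
    case False then show ?thesis using e0 that by (simp add: mult_left_mono)
  qed
  have e0i: "eps0 * integral\<^sup>L P (\<lambda>\<omega>. sqnorm M (w \<omega>)) \<le> eps0 * K"
    if "integrable P (\<lambda>\<omega>. sqnorm M (w \<omega>))" "\<And>\<omega>. \<omega>\<in>space P \<Longrightarrow> sqnorm M (w \<omega>) \<le> K" "0 \<le> K" "M = 0 \<Longrightarrow> K = 0" for w K
  proof (cases "M = 0")
    case True then show ?thesis using that by (simp add: sqnorm_def)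
  next
    case False
    have "integral\<^sup>L P (\<lambda>\<omega>. sqnorm M (w \<omega>)) \<le> integral\<^sup>L P (\<lambda>\<omega>. K)"
      using that by (intro integral_mono) auto
    also have "\<dots> = K" by (simp add: prob_space)
    finally show ?thesis using e0 False by (simp add: mult_left_mono)
  qed
  have sadxb: "0 \<le> f 0 (xb \<omega>) - f 0 xs + (\<Sum>i=1..M. zs i * f i (xb \<omega>))" if "\<omega> \<in> space P" for \<omega>
    using sad[of "xb \<omega>"] assms(6) that by auto

  define z1 where "z1 = (\<lambda>\<omega> i. 2 * zs i * (if f i (xb \<omega>) > 0 then 1 else 0::real))"
  have z1m: "(\<lambda>\<omega>. z1 \<omega> i) \<in> borel_measurable P" if "i \<in> {1..M}" for i
  proof -
    have [measurable]: "(\<lambda>\<omega>. f i (xb \<omega>)) \<in> borel_measurable P" using fm that by auto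
    show ?thesis unfolding z1_def by measurable
  qed
  have z1f: "z1 \<omega> i * f i (xb \<omega>) = 2 * zs i * max (f i (xb \<omega>)) 0" for \<omega> i
    unfolding z1_def by auto
  have sq1m: "(\<lambda>\<omega>. sqnorm M (z1 \<omega>)) \<in> borel_measurable P"
    unfolding sqnorm_def by (intro borel_measurable_sum borel_measurable_power z1m)
  have sq1b: "sqnorm M (z1 \<omega>) \<le> 4 * s" for \<omega>
  proof -
    have "sqnorm M (z1 \<omega>) \<le> (\<Sum>i=1..M. 4 * (zs i)^2)"
      unfolding sqnorm_def z1_def by (intro sum_mono) (auto simp: power2_eq_square)
    then show ?thesis unfolding s_def sqnorm_def by (simp add: sum_distrib_left)
  qed
  have sq1i: "integrable P (\<lambda>\<omega>. sqnorm M (z1 \<omega>))"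
  proof (rule integrable_const_bound[where B = "4 * s"])
    show "AE \<omega> in P. norm (sqnorm M (z1 \<omega>)) \<le> 4 * s"
      using sq1b by (auto simp: sqnorm_def sum_nonneg)
  qed (rule sq1m)
  have absi: "integrable P (\<lambda>\<omega>. \<bar>f 0 (xb \<omega>) - f 0 xs\<bar>)"
    by (intro integrable_abs Bochner_Integration.integrable_diff fint integrable_const) auto
  have b1a: "integral\<^sup>L P (\<lambda>\<omega>. \<bar>f 0 (xb \<omega>) - f 0 xs\<bar>) \<le> eps1 + eps0 * integral\<^sup>L P (\<lambda>\<omega>. sqnorm M (z1 \<omega>))"
  proof (rule test[OF _ _ sq1i absi])
    show "\<forall>i\<in>{1..M}. (\<lambda>\<omega>. z1 \<omega> i) \<in> borel_measurable P \<and> (\<forall>\<omega>\<in>space P. z1 \<omega> i \<ge> 0)"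
      using z1m zs0 by (auto simp: z1_def)
    show "integrable P (\<lambda>\<omega>. z1 \<omega> i * f i (xb \<omega>))" if "i \<in> {1..M}" for i
      unfolding z1f using that by (intro integrable_mult_right integrable_max fint integrable_const) auto
    fix \<omega> assume w: "\<omega> \<in> space P"
    have m1: "(\<Sum>i=1..M. zs i * f i (xb \<omega>)) \<le> (\<Sum>i=1..M. zs i * max (f i (xb \<omega>)) 0)"
      using zs0 by (intro sum_mono mult_left_mono) auto
    have m2: "0 \<le> (\<Sum>i=1..M. zs i * max (f i (xb \<omega>)) 0)"
      using zs0 by (intro sum_nonneg) auto
    have "(\<Sum>i=1..M. z1 \<omega> i * f i (xb \<omega>)) = 2 * (\<Sum>i=1..M. zs i * max (f i (xb \<omega>)) 0)"
      unfolding z1f by (simp add: sum_distrib_left mult.assoc)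
    then show "\<bar>f 0 (xb \<omega>) - f 0 xs\<bar> \<le> f 0 (xb \<omega>) - f 0 xs + (\<Sum>i=1..M. z1 \<omega> i * f i (xb \<omega>))"
      using sadxb[OF w] m1 m2 by linarith
  qed
  have b1: "integral\<^sup>L P (\<lambda>\<omega>. \<bar>f 0 (xb \<omega>) - f 0 xs\<bar>) \<le> eps1 + 4 * eps0 * s"
    using b1a e0i[OF sq1i sq1b] s0 by (auto simp: s_def sqnorm_def)
  have b1pos: "0 \<le> integral\<^sup>L P (\<lambda>\<omega>. \<bar>f 0 (xb \<omega>) - f 0 xs\<bar>)"
    by (rule Bochner_Integration.integral_nonneg) simp
  have eps0s: "0 \<le> eps0 * s" using e0 s0 by (auto simp: s_def sqnorm_def)

  define z2 where "z2 = (\<lambda>\<omega> i. zs i + (if f i (xb \<omega>) > 0 then 1 else 0::real))"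
  have z2m: "(\<lambda>\<omega>. z2 \<omega> i) \<in> borel_measurable P" if "i \<in> {1..M}" for i
  proof -
    have [measurable]: "(\<lambda>\<omega>. f i (xb \<omega>)) \<in> borel_measurable P" using fm that by auto
    show ?thesis unfolding z2_def by measurable
  qed
  have z2f: "z2 \<omega> i * f i (xb \<omega>) = zs i * f i (xb \<omega>) + max (f i (xb \<omega>)) 0" for \<omega> i
    unfolding z2_def by (auto simp: distrib_right)
  have sq2m: "(\<lambda>\<omega>. sqnorm M (z2 \<omega>)) \<in> borel_measurable P"
    unfolding sqnorm_def by (intro borel_measurable_sum borel_measurable_power z2m)
  have sq2b: "sqnorm M (z2 \<omega>) \<le> sqnorm M (\<lambda>i. 1 + zs i)" for \<omega>
    unfolding sqnorm_def z2_def using zs0 by (intro sum_mono power_mono) auto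
  have sq2i: "integrable P (\<lambda>\<omega>. sqnorm M (z2 \<omega>))"
  proof (rule integrable_const_bound[where B = "sqnorm M (\<lambda>i. 1 + zs i)"])
    show "AE \<omega> in P. norm (sqnorm M (z2 \<omega>)) \<le> sqnorm M (\<lambda>i. 1 + zs i)"
      using sq2b by (auto simp: sqnorm_def sum_nonneg)
  qed (rule sq2m)
  have maxi: "integrable P (\<lambda>\<omega>. \<Sum>i=1..M. max (f i (xb \<omega>)) 0)"
    by (intro Bochner_Integration.integrable_sum integrable_max fint integrable_const) auto
  have b2a: "integral\<^sup>L P (\<lambda>\<omega>. \<Sum>i=1..M. max (f i (xb \<omega>)) 0) \<le> eps1 + eps0 * integral\<^sup>L P (\<lambda>\<omega>. sqnorm M (z2 \<omega>))"
  proof (rule test[OF _ _ sq2i maxi])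
    show "\<forall>i\<in>{1..M}. (\<lambda>\<omega>. z2 \<omega> i) \<in> borel_measurable P \<and> (\<forall>\<omega>\<in>space P. z2 \<omega> i \<ge> 0)"
      using z2m zs0 by (auto simp: z2_def)
    show "integrable P (\<lambda>\<omega>. z2 \<omega> i * f i (xb \<omega>))" if "i \<in> {1..M}" for i
      unfolding z2f using that
      by (intro Bochner_Integration.integrable_add integrable_mult_right integrable_max fint integrable_const) auto
    fix \<omega> assume w: "\<omega> \<in> space P"
    have "(\<Sum>i=1..M. z2 \<omega> i * f i (xb \<omega>)) = (\<Sum>i=1..M. zs i * f i (xb \<omega>)) + (\<Sum>i=1..M. max (f i (xb \<omega>)) 0)"
      unfolding z2f by (simp add: sum.distrib)
    then show "(\<Sum>i=1..M. max (f i (xb \<omega>)) 0) \<le> f 0 (xb \<omega>) - f 0 xs + (\<Sum>i=1..M. z2 \<omega> i * f i (xb \<omega>))"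
      using sadxb[OF w] by linarith
  qed
  have b2: "integral\<^sup>L P (\<lambda>\<omega>. \<Sum>i=1..M. max (f i (xb \<omega>)) 0) \<le> eps1 + eps0 * sqnorm M (\<lambda>i. 1 + zs i)"
    using b2a e0i[OF sq2i sq2b] by (auto simp: sqnorm_def sum_nonneg)
  obtain C where Cc: "countable C" and CX: "C \<subseteq> X" and xsC: "xs \<in> C"
    and Cd: "\<forall>x\<in>X. \<forall>e>0. \<exists>c\<in>C. \<forall>i\<le>M. \<bar>f i c - f i x\<bar> < e"
    using density[OF xsX, where f=f and M=M] by blast
  define cn where "cn = from_nat_into C"
  have Cne: "C \<noteq> {}" using xsC by blast
  have cnX: "cn n \<in> X" for n unfolding cn_def using from_nat_into[OF Cne] CX by blast
  have rangeC: "range cn = C" unfolding cn_def by (rule range_from_nat_into[OF Cne Cc])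
  have zbnn: "\<forall>i\<in>{1..M}. zb \<omega> i \<ge> 0" if "\<omega> \<in> space P" for \<omega> using zb0 that by blast
  have dle: "dualfun X f M (zb \<omega>) \<le> lagr f M (zb \<omega>) y" if "\<omega> \<in> space P" "y \<in> X" for \<omega> y
    unfolding dualfun_def using cINF_lower[OF bdd[OF zbnn[OF that(1)]] that(2)] .
  have fdzs: "integrable P (\<lambda>\<omega>. f 0 (xb \<omega>) + (\<Sum>i=1..M. zs i * f i (xb \<omega>)))"
    by (intro Bochner_Integration.integrable_add Bochner_Integration.integrable_sum integrable_mult_right fint) auto
  have b3: "integral\<^sup>L P (\<lambda>\<omega>. dualfun X f M zs - dualfun X f M (zb \<omega>)) \<le> eps1 + eps0 * s"
  proof (rule field_le_epsilon)
    fix \<delta> :: real assume \<delta>: "\<delta> > 0"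
    have ex: "\<exists>n. lagr f M (zb \<omega>) (cn n) < dualfun X f M (zb \<omega>) + \<delta>" if w: "\<omega> \<in> space P" for \<omega>
    proof -
      have "(INF y\<in>X. lagr f M (zb \<omega>) y) < dualfun X f M (zb \<omega>) + \<delta>/2"
        unfolding dualfun_def using \<delta> by simp
      then obtain y where y: "y \<in> X" "lagr f M (zb \<omega>) y < dualfun X f M (zb \<omega>) + \<delta>/2"
        using cINF_less_iff[of X "\<lambda>y. lagr f M (zb \<omega>) y", OF _ bdd[OF zbnn[OF w]]] xsX by blast
      define K where "K = 1 + (\<Sum>i=1..M. \<bar>zb \<omega> i\<bar>)"
      have K: "K \<ge> 1" unfolding K_def by (simp add: sum_nonneg)
      obtain c where c: "c \<in> C" "\<forall>i\<le>M. \<bar>f i c - f i y\<bar> < \<delta> / (2*K)"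
        using Cd y(1) \<delta> K by (metis divide_pos_pos mult_pos_pos zero_less_numeral less_le_trans zero_less_one)
      have "\<bar>lagr f M (zb \<omega>) c - lagr f M (zb \<omega>) y\<bar> \<le> \<delta> / (2*K) * K"
        using lagr_close[OF c(2)] unfolding K_def .
      also have "\<dots> = \<delta>/2" using K by (simp add: field_simps)
      finally have "lagr f M (zb \<omega>) c < dualfun X f M (zb \<omega>) + \<delta>" using y(2) by linarith
      moreover obtain n where "c = cn n" using c(1) rangeC by blast
      ultimately show ?thesis by blast
    qed
    define N where "N = (\<lambda>\<omega>. LEAST n. lagr f M (zb \<omega>) (cn n) < dualfun X f M (zb \<omega>) + \<delta>)"
    define x where "x = (\<lambda>\<omega>. cn (N \<omega>))"
    have xprop: "lagr f M (zb \<omega>) (x \<omega>) < dualfun X f M (zb \<omega>) + \<delta>" if "\<omega> \<in> space P" for \<omega>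
      unfolding x_def N_def using ex[OF that] by (rule LeastI_ex)
    have xX: "x \<omega> \<in> X" for \<omega> unfolding x_def by (rule cnX)
    have Lm: "(\<lambda>\<omega>. lagr f M (zb \<omega>) y) \<in> borel_measurable P" for y
      unfolding lagr_def by (intro borel_measurable_add borel_measurable_const borel_measurable_sum
          borel_measurable_times zbm) auto
    have Nm: "N \<in> measurable P (count_space UNIV)"
      unfolding N_def
    proof (rule measurable_Least)
      fix n
      show "Measurable.pred P (\<lambda>\<omega>. lagr f M (zb \<omega>) (cn n) < dualfun X f M (zb \<omega>) + \<delta>)"
        using Lm[of "cn n"] dm by measurable
    qed
    have xm: "x \<in> borel_measurable P"
      unfolding x_def by (rule measurable_compose[OF Nm]) (simp add: measurable_count_space_eq1)
    have Lxm: "(\<lambda>\<omega>. lagr f M (zb \<omega>) (x \<omega>)) \<in> borel_measurable P"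
    proof -
      have "(\<lambda>\<omega>. lagr f M (zb \<omega>) (x \<omega>)) = (\<lambda>\<omega>. f 0 (x \<omega>) + (\<Sum>i=1..M. zb \<omega> i * f i (x \<omega>)))"
        unfolding lagr_def ..
      moreover have "(\<lambda>\<omega>. f 0 (x \<omega>) + (\<Sum>i=1..M. zb \<omega> i * f i (x \<omega>))) \<in> borel_measurable P"
      proof -
        have fx: "(\<lambda>\<omega>. f i (x \<omega>)) \<in> borel_measurable P" for i
          unfolding x_def by (rule measurable_compose[OF Nm]) (simp add: measurable_count_space_eq1)
        show ?thesis by (intro borel_measurable_add borel_measurable_sum borel_measurable_times zbm fx) auto
      qed
      ultimately show ?thesis by simp
    qed
    have Lxi: "integrable P (\<lambda>\<omega>. lagr f M (zb \<omega>) (x \<omega>))"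
    proof (rule Bochner_Integration.integrable_bound[where f = "\<lambda>\<omega>. \<bar>dualfun X f M (zb \<omega>)\<bar> + \<delta>"])
      show "integrable P (\<lambda>\<omega>. \<bar>dualfun X f M (zb \<omega>)\<bar> + \<delta>)"
        using assms(10) by (intro Bochner_Integration.integrable_add integrable_abs integrable_const)
      show "AE \<omega> in P. norm (lagr f M (zb \<omega>) (x \<omega>)) \<le> norm (\<bar>dualfun X f M (zb \<omega>)\<bar> + \<delta>)"
      proof (rule AE_I2)
        fix \<omega> assume w: "\<omega> \<in> space P"
        show "norm (lagr f M (zb \<omega>) (x \<omega>)) \<le> norm (\<bar>dualfun X f M (zb \<omega>)\<bar> + \<delta>)"
        proof -
          have "dualfun X f M (zb \<omega>) \<le> lagr f M (zb \<omega>) (x \<omega>)" by (rule dle[OF w xX])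
          then show ?thesis using xprop[OF w] \<delta> by (simp add: abs_le_iff) linarith
        qed
      qed
    qed (rule Lxm)
    define z where "z = (\<lambda>(\<omega>::'w). zs)"
    have gapeq: "gap_integrand f M xb zb x z = (\<lambda>\<omega>. (f 0 (xb \<omega>) + (\<Sum>i=1..M. zs i * f i (xb \<omega>))) - lagr f M (zb \<omega>) (x \<omega>))"
      unfolding gap_integrand_def lagr_def z_def by (rule ext) simp
    have gi: "integrable P (gap_integrand f M xb zb x z)"
      unfolding gapeq by (intro Bochner_Integration.integrable_diff fdzs Lxi)
    have "admissible P X f M xb zb x z"
      unfolding admissible_def using xm xX gi zs0 by (auto simp: z_def)
    then have "integral\<^sup>L P (gap_integrand f M xb zb x z) \<le> eps1 + eps0 * integral\<^sup>L P (\<lambda>\<omega>. sqnorm M (z \<omega>))"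
      using H by blast
    also have "integral\<^sup>L P (\<lambda>\<omega>. sqnorm M (z \<omega>)) = s" unfolding z_def s_def by (simp add: prob_space)
    finally have g1: "integral\<^sup>L P (gap_integrand f M xb zb x z) \<le> eps1 + eps0 * s" .
    have di: "integrable P (\<lambda>\<omega>. dualfun X f M zs - dualfun X f M (zb \<omega>))"
      using assms(10) by (intro Bochner_Integration.integrable_diff integrable_const)
    have "integral\<^sup>L P (\<lambda>\<omega>. dualfun X f M zs - dualfun X f M (zb \<omega>) - \<delta>) \<le> integral\<^sup>L P (gap_integrand f M xb zb x z)"
    proof (rule integral_mono)
      show "integrable P (\<lambda>\<omega>. dualfun X f M zs - dualfun X f M (zb \<omega>) - \<delta>)"
        by (rule Bochner_Integration.integrable_diff[OF di integrable_const])
      show "integrable P (gap_integrand f M xb zb x z)" by (rule gi)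
      fix \<omega> assume w: "\<omega> \<in> space P"
      show "dualfun X f M zs - dualfun X f M (zb \<omega>) - \<delta> \<le> gap_integrand f M xb zb x z \<omega>"
        unfolding gapeq dzs using sadxb[OF w] xprop[OF w] by simp
    qed
    also have "integral\<^sup>L P (\<lambda>\<omega>. dualfun X f M zs - dualfun X f M (zb \<omega>) - \<delta>)
        = integral\<^sup>L P (\<lambda>\<omega>. dualfun X f M zs - dualfun X f M (zb \<omega>)) - \<delta>"
      using di assms(10) by (simp add: prob_space)
    finally show "integral\<^sup>L P (\<lambda>\<omega>. dualfun X f M zs - dualfun X f M (zb \<omega>)) \<le> eps1 + eps0 * s + \<delta>"
      using g1 by linarith
  qed
  show ?thesis
  proof (intro conjI)
    show "integral\<^sup>L P (\<lambda>\<omega>. \<bar>f 0 (xb \<omega>) - f 0 xs\<bar>) \<le> 2 * eps1 + 9 * eps0 * sqnorm M zs"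
      using b1 b1pos eps0s unfolding s_def by linarith
    show "integral\<^sup>L P (\<lambda>\<omega>. \<Sum>i=1..M. max (f i (xb \<omega>)) 0) \<le> eps1 + eps0 * sqnorm M (\<lambda>i. 1 + zs i)"
      by (rule b2)
    show "integral\<^sup>L P (\<lambda>\<omega>. dualfun X f M zs - dualfun X f M (zb \<omega>)) \<le> 3/2 * (eps1 + 3 * eps0 * sqnorm M zs)"
    proof -
      have "3/2 * (eps1 + 3 * eps0 * s) = 3/2 * eps1 + 9/2 * (eps0 * s)" by (simp add: algebra_simps)
      moreover have "eps1 + 4 * eps0 * s = eps1 + 4 * (eps0 * s)" by simp
      ultimately show ?thesis using b3 b1 b1pos eps0s unfolding s_def by linarith
    qed
  qed
qed

end
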